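(* Let $n=p$, $X=I_n$, and let $\lambda=\lambda_n>0$ satisfy $\sqrt n/\lambda_n\to\infty$. Then there exists $\delta>0$ such that, as $n\to\infty$, \[ \mathbb E_{\beta^0=0}\,\Pi^{\mathrm{LASSO}}_{\lambda_n}\Big(\beta:\|\beta\|_2\le\delta\sqrt n\Big(\frac1{\lambda_n}\wedge1\Big)\ \Big|\ Y\Big)\to0. \]
   Context: Sequence model: $Y=\beta+\varepsilon$ with $\beta\in\mathbb R^n$ and $\varepsilon\sim N_n(0,I_n)$; $\mathbb E_{\beta^0=0}$ denotes expectation when $Y\sim N_n(0,I_n)$. $\Pi^{\mathrm{LASSO}}_\lambda(\cdot\mid Y)$ is the posterior distribution for the prior under which $\beta_1,\dots,\beta_n$ are i.i.d. with Laplace density $x\mapsto\frac\lambda2e^{-\lambda|x|}$, i.e. $\Pi^{\mathrm{LASSO}}_\lambda(B\mid Y)\propto\int_Be^{-\|Y-\beta\|_2^2/2-\lambda\|\beta\|_1}d\beta$ (whose mode is the LASSO estimator). *)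

theory Defs
  imports "HOL-Probability.Probability"
begin

text \<open>Lebesgue measure on R^n, with vectors represented as functions nat => real
  on the index set {..<n} (extensional functions, product measure).\<close>
abbreviation lebesgue_n :: "nat \<Rightarrow> (nat \<Rightarrow> real) measure" where
  "lebesgue_n n \<equiv> PiM {..<n} (\<lambda>_. lborel)"

abbreviation std_gauss_n :: "nat \<Rightarrow> (nat \<Rightarrow> real) measure" where
  "std_gauss_n n \<equiv> PiM {..<n} (\<lambda>_. density lborel std_normal_density)"

definition lasso_weight :: "nat \<Rightarrow> real \<Rightarrow> (nat \<Rightarrow> real) \<Rightarrow> (nat \<Rightarrow> real) \<Rightarrow> real" where
  "lasso_weight n lam Y b =
     exp (- (\<Sum>i<n. (Y i - b i)^2) / 2 - lam * (\<Sum>i<n. \<bar>b i\<bar>))"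

text \<open>Posterior probability of a set B under the Laplace(lam) prior.\<close>
definition lasso_post :: "nat \<Rightarrow> real \<Rightarrow> (nat \<Rightarrow> real) \<Rightarrow> (nat \<Rightarrow> real) set \<Rightarrow> real" where
  "lasso_post n lam Y B =
     (LINT b:B | lebesgue_n n. lasso_weight n lam Y b) /
     (LINT b | lebesgue_n n. lasso_weight n lam Y b)"

end

theory Submission
  imports Defs
begin

definition lw :: "real \<Rightarrow> real \<Rightarrow> real \<Rightarrow> real" where
  "lw lam y x = exp (- ((y - x)^2) / 2 - lam * \<bar>x\<bar>)"

lemma lw_pos: "lw lam y x > 0" by (simp add: lw_def)

lemma lw_meas[measurable]: "lw lam y \<in> borel_measurable borel"
  unfolding lw_def by measurable

lemma lw_int: assumes "lam \<ge> 0" shows "integrable lborel (lw lam y)"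
proof (rule Bochner_Integration.integrable_bound)
  show "integrable lborel (\<lambda>x. sqrt (2*pi) * normal_density y 1 x)" by simp
  show "lw lam y \<in> borel_measurable lborel" by simp
  show "AE x in lborel. norm (lw lam y x) \<le> norm (sqrt (2*pi) * normal_density y 1 x)"
  proof (rule AE_I2)
    fix x
    have "lam * \<bar>x\<bar> \<ge> 0" using assms by simp
    hence "lw lam y x \<le> exp (- ((x - y)^2) / 2)" unfolding lw_def by (simp add: power2_commute)
    also have "\<dots> = sqrt (2*pi) * normal_density y 1 x" by (simp add: normal_density_def)
    finally show "norm (lw lam y x) \<le> norm (sqrt (2*pi) * normal_density y 1 x)"
      using lw_pos[of lam y x] by (simp add: normal_density_def)
  qed
qed

lemma lw_int_bdd: assumes "lam \<ge> 0" and [measurable]: "g \<in> borel_measurable borel"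
  and "\<And>x. \<bar>g x\<bar> \<le> 1"
  shows "integrable lborel (\<lambda>x. lw lam y x * g x)"
proof (rule Bochner_Integration.integrable_bound[OF lw_int[OF assms(1), of y]])
  show "(\<lambda>x. lw lam y x * g x) \<in> borel_measurable lborel" by simp
  show "AE x in lborel. norm (lw lam y x * g x) \<le> norm (lw lam y x)"
    using assms(3) lw_pos[of lam y] by (auto simp: abs_mult intro!: mult_left_le)
qed

lemma lw_int_ind: assumes "lam \<ge> 0" and [measurable]: "A \<in> sets borel"
  shows "integrable lborel (\<lambda>x. lw lam y x * indicator A x)"
  by (rule lw_int_bdd[OF assms(1)]) (auto split: split_indicator)

lemma key_pos:
  fixes lam y :: real
  assumes lam: "lam > 0" and y: "y \<ge> 0"
  defines "m \<equiv> min (1/lam) 1"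
  shows "(\<integral>x. lw lam y x * exp (- \<bar>x\<bar> / m) \<partial>lborel)
     \<le> (1 - (1 - exp (-1)) / (1 + 2 * exp (5/2))) * (\<integral>x. lw lam y x \<partial>lborel)"
proof -
  let ?f = "lw lam y"
  have m0: "m > 0" and m1: "m \<le> 1" and lm: "lam * m \<le> 1"
    using lam by (auto simp: m_def min_def field_simps)
  define A where "A = {0..<m}"
  define B where "B = {m..<2*m}"
  define C where "C = {-m<..<0}"
  define Ou where "Ou = {x::real. m \<le> \<bar>x\<bar>}"
  have [measurable]: "A \<in> sets borel" "B \<in> sets borel" "C \<in> sets borel" "Ou \<in> sets borel"
    by (auto simp: A_def B_def C_def Ou_def)
  have intf: "integrable lborel ?f" using lw_int lam by simp
  have intA: "integrable lborel (\<lambda>x. ?f x * indicator A x)"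
    and intB: "integrable lborel (\<lambda>x. ?f x * indicator B x)"
    and intC: "integrable lborel (\<lambda>x. ?f x * indicator C x)"
    and intOu: "integrable lborel (\<lambda>x. ?f x * indicator Ou x)"
    using lam by (auto intro!: lw_int_ind)
  define IA where "IA = (\<integral>x. ?f x * indicator A x \<partial>lborel)"
  define IB where "IB = (\<integral>x. ?f x * indicator B x \<partial>lborel)"
  define IC where "IC = (\<integral>x. ?f x * indicator C x \<partial>lborel)"
  define MO where "MO = (\<integral>x. ?f x * indicator Ou x \<partial>lborel)"
  define D where "D = (\<integral>x. ?f x \<partial>lborel)"
  have "D = (\<integral>x. (?f x * indicator A x + ?f x * indicator C x) + ?f x * indicator Ou x \<partial>lborel)"
    unfolding D_def using m0
    by (intro Bochner_Integration.integral_cong) (auto simp: A_def C_def Ou_def split: split_indicator)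
  also have "\<dots> = IA + IC + MO"
    unfolding IA_def IC_def MO_def using intA intC intOu by simp
  finally have Dsum: "D = IA + IC + MO" .
  have "IC = (\<integral>x. ?f (0 + (-1) * x) * indicator C (0 + (-1) * x) \<partial>lborel)"
    unfolding IC_def by (subst lborel_integral_real_affine[where c="-1" and t=0]) auto
  also have "\<dots> \<le> IA" unfolding IA_def
  proof (rule integral_mono'[OF intA])
    fix x :: real
    show "0 \<le> ?f x * indicator A x" using lw_pos[of lam y x] by simp
    show "?f (0 + (-1) * x) * indicator C (0 + (-1) * x) \<le> ?f x * indicator A x"
    proof (cases "x \<in> {0<..<m}")
      case True
      hence "(y - (-x))^2 \<ge> (y - x)^2" using y by (simp add: power2_eq_square algebra_simps)
      hence "?f (-x) \<le> ?f x" unfolding lw_def by simp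
      thus ?thesis using True by (simp add: A_def C_def indicator_def)
    next
      case False
      thus ?thesis using lw_pos[of lam y x] by (auto simp: A_def C_def indicator_def)
    qed
  qed
  finally have CA: "IC \<le> IA" .
  have "exp (-5/2) * IA = (\<integral>x. exp (-5/2) * (?f x * indicator A x) \<partial>lborel)"
    unfolding IA_def by simp
  also have "\<dots> \<le> (\<integral>x. ?f (m + 1 * x) * indicator B (m + 1 * x) \<partial>lborel)"
  proof (rule integral_mono')
    show "integrable lborel (\<lambda>x. ?f (m + 1 * x) * indicator B (m + 1 * x))"
      using lborel_integrable_real_affine[OF intB, of 1 m] by simp
    fix x :: real
    show "0 \<le> ?f (m + 1 * x) * indicator B (m + 1 * x)" using lw_pos[of lam y "m+x"] by simp
    show "exp (-5/2) * (?f x * indicator A x) \<le> ?f (m + 1 * x) * indicator B (m + 1 * x)"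
    proof (cases "x \<in> A")
      case True
      hence x0: "0 \<le> x" "x < m" by (auto simp: A_def)
      have "m * x \<le> 1" using x0 m1 m0 by (smt (verit) mult_le_one)
      moreover have "m * y \<ge> 0" using m0 y by simp
      ultimately have "- ((y - x)^2) / 2 - lam * \<bar>x\<bar> - 5/2 \<le> - ((y - (m + x))^2) / 2 - lam * \<bar>m + x\<bar>"
      proof -
        have id: "- ((y - (m + x))^2) / 2 - lam * \<bar>m + x\<bar> = - ((y - x)^2) / 2 - lam * \<bar>x\<bar> - m*m/2 + m*y - m*x - lam*m"
          using x0 m0 by (simp add: power2_eq_square field_simps abs_of_nonneg)
        have "m*m \<le> 1" using m0 m1 by (simp add: mult_le_one)
        thus ?thesis unfolding id using \<open>m * x \<le> 1\<close> \<open>m * y \<ge> 0\<close> lm by linarith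
      qed
      hence "exp (-5/2) * ?f x \<le> ?f (m + 1 * x)"
        unfolding lw_def by (simp add: mult_exp_exp[symmetric] del: mult_exp_exp) (simp add: exp_add[symmetric])
      thus ?thesis using True x0 by (simp add: B_def)
    next
      case False
      thus ?thesis using lw_pos[of lam y "m+x"] by simp
    qed
  qed
  also have "\<dots> = IB" unfolding IB_def
    by (subst lborel_integral_real_affine[where c=1 and t=m]) auto
  finally have AB: "exp (-5/2) * IA \<le> IB" .
  have BO: "IB \<le> MO" unfolding IB_def MO_def
  proof (rule integral_mono'[OF intOu])
    fix x :: real
    show "0 \<le> ?f x * indicator Ou x" using lw_pos[of lam y x] by simp
    show "?f x * indicator B x \<le> ?f x * indicator Ou x"
      using lw_pos[of lam y x] m0 by (auto simp: B_def Ou_def indicator_def)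
  qed
  define c1 where "c1 = 1 - exp (-1::real)"
  have c1: "0 \<le> c1" "c1 \<le> 1" by (auto simp: c1_def)
  have "(\<integral>x. ?f x * exp (- \<bar>x\<bar> / m) \<partial>lborel) \<le> (\<integral>x. ?f x - c1 * (?f x * indicator Ou x) \<partial>lborel)"
  proof (rule integral_mono')
    show "integrable lborel (\<lambda>x. ?f x - c1 * (?f x * indicator Ou x))"
      using intf intOu by simp
    fix x :: real
    have fx: "?f x > 0" by (rule lw_pos)
    show "0 \<le> ?f x - c1 * (?f x * indicator Ou x)"
      using fx c1 by (auto simp: indicator_def)
    show "?f x * exp (- \<bar>x\<bar> / m) \<le> ?f x - c1 * (?f x * indicator Ou x)"
    proof (cases "x \<in> Ou")
      case True
      hence "- \<bar>x\<bar> / m \<le> -1" using m0 by (simp add: Ou_def field_simps)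
      hence "exp (- \<bar>x\<bar> / m) \<le> exp (-1)" by simp
      thus ?thesis using True fx by (simp add: c1_def algebra_simps)
    next
      case False
      have "exp (- \<bar>x\<bar> / m) \<le> 1" using m0 by simp
      thus ?thesis using False fx by simp
    qed
  qed
  also have "\<dots> = D - c1 * MO" unfolding D_def MO_def using intf intOu by simp
  finally have L: "(\<integral>x. ?f x * exp (- \<bar>x\<bar> / m) \<partial>lborel) \<le> D - c1 * MO" .
  have e: "exp (5/2::real) * exp (-5/2) = 1" by (simp flip: exp_add)
  have "IA \<le> exp (5/2) * IB"
  proof -
    have "exp (5/2) * (exp (-5/2) * IA) \<le> exp (5/2) * IB"
      using AB by (intro mult_left_mono) auto
    also have "exp (5/2) * (exp (-5/2) * IA) = IA"
      using e by (simp only: mult.assoc[symmetric])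
    finally show ?thesis .
  qed
  moreover have "exp (5/2) * IB \<le> exp (5/2) * MO" using BO by (intro mult_left_mono) auto
  moreover have "(1 + 2 * exp (5/2)) * MO = MO + 2 * (exp (5/2) * MO)" by (simp add: algebra_simps)
  ultimately have "D \<le> (1 + 2 * exp (5/2)) * MO" using Dsum CA by linarith
  hence "D / (1 + 2 * exp (5/2)) \<le> MO" by (simp add: field_simps add_pos_pos)
  hence "c1 * (D / (1 + 2 * exp (5/2))) \<le> c1 * MO" using c1 by (intro mult_left_mono) auto
  hence "D - c1 * MO \<le> (1 - c1 / (1 + 2 * exp (5/2))) * D" by (simp add: algebra_simps)
  with L show ?thesis unfolding D_def c1_def by simp
qed

definition qc :: real where "qc = 1 - (1 - exp (-1)) / (1 + 2 * exp (5/2))"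

lemma qc_bounds: "0 < qc" "qc < 1"
proof -
  have a: "0 < 1 - exp (-1::real)" "1 - exp (-1::real) < 1" by auto
  have b: "1 < 1 + 2 * exp (5/2::real)" by simp
  have "(1 - exp (-1::real)) / (1 + 2 * exp (5/2)) < 1"
  proof -
    have "0 < exp (5/2::real)" by simp
    hence p: "0 < 1 + 2 * exp (5/2::real)" by linarith
    show ?thesis using a b p by (simp add: divide_less_eq) (smt (verit) exp_gt_zero)
  qed
  moreover have "0 < (1 - exp (-1::real)) / (1 + 2 * exp (5/2))"
    using a b by (intro divide_pos_pos) linarith+
  ultimately show "0 < qc" "qc < 1" unfolding qc_def by auto
qed

lemma key:
  fixes lam y :: real
  assumes lam: "lam > 0"
  shows "(\<integral>x. lw lam y x * exp (- \<bar>x\<bar> / min (1/lam) 1) \<partial>lborel)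
     \<le> qc * (\<integral>x. lw lam y x \<partial>lborel)"
proof (cases "y \<ge> 0")
  case True
  thus ?thesis using key_pos[OF lam True] unfolding qc_def by simp
next
  case False
  have refl: "(\<integral>x. lw lam y x * g x \<partial>lborel) = (\<integral>x. lw lam (-y) x * g (-x) \<partial>lborel)" for g :: "real \<Rightarrow> real"
  proof -
    have "(\<integral>x. lw lam y x * g x \<partial>lborel) = (\<integral>x. lw lam y (0 + (-1) * x) * g (0 + (-1) * x) \<partial>lborel)"
      by (subst lborel_integral_real_affine[where c="-1" and t=0]) auto
    also have "\<dots> = (\<integral>x. lw lam (-y) x * g (-x) \<partial>lborel)"
      by (intro Bochner_Integration.integral_cong) (auto simp: lw_def power2_eq_square algebra_simps)
    finally show ?thesis .
  qed
  have "(\<integral>x. lw lam y x * exp (- \<bar>x\<bar> / min (1/lam) 1) \<partial>lborel)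
      = (\<integral>x. lw lam (-y) x * exp (- \<bar>x\<bar> / min (1/lam) 1) \<partial>lborel)"
    using refl[of "\<lambda>x. exp (- \<bar>x\<bar> / min (1/lam) 1)"] by simp
  also have "\<dots> \<le> qc * (\<integral>x. lw lam (-y) x \<partial>lborel)"
    using key_pos[OF lam, of "-y"] False unfolding qc_def by simp
  also have "(\<integral>x. lw lam (-y) x \<partial>lborel) = (\<integral>x. lw lam y x \<partial>lborel)"
    using refl[of "\<lambda>x. 1"] by simp
  finally show ?thesis .
qed

lemma weight_prod: "lasso_weight n lam Y b = (\<Prod>i<n. lw lam (Y i) (b i))"
proof -
  have "- (\<Sum>i<n. (Y i - b i)^2) / 2 - lam * (\<Sum>i<n. \<bar>b i\<bar>)
      = (\<Sum>i<n. - ((Y i - b i)^2) / 2 - lam * \<bar>b i\<bar>)"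
    by (simp add: sum_subtractf sum_distrib_left sum_divide_distrib sum_negf)
  thus ?thesis unfolding lasso_weight_def lw_def by (simp add: exp_sum)
qed

lemma Di_pos: assumes "lam \<ge> 0" shows "0 < (\<integral>x. lw lam y x \<partial>lborel)"
proof -
  have i: "integrable lborel (lw lam y)" using lw_int assms by simp
  have ge: "0 \<le> (\<integral>x. lw lam y x \<partial>lborel)"
    by (rule Bochner_Integration.integral_nonneg) (simp add: less_imp_le lw_pos)
  have "(\<integral>x. lw lam y x \<partial>lborel) \<noteq> 0"
  proof
    assume "(\<integral>x. lw lam y x \<partial>lborel) = 0"
    hence "AE x in lborel. lw lam y x = 0"
      using integral_nonneg_eq_0_iff_AE[OF i] by (simp add: less_imp_le lw_pos)
    hence "AE (x::real) in lborel. False" by (simp add: lw_pos less_imp_neq[symmetric])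
    hence "ae_filter (lborel::real measure) = bot" using trivial_limit_def by blast
    hence "emeasure (lborel::real measure) (space lborel) = 0" by (simp add: ae_filter_eq_bot_iff)
    thus False by simp
  qed
  with ge show ?thesis by simp
qed

lemma psf: "product_sigma_finite (\<lambda>_::nat. lborel :: real measure)"
  by (simp add: product_sigma_finite_def lborel.sigma_finite_measure_axioms)

lemma post_bound:
  fixes lam d :: real and n :: nat and Y :: "nat \<Rightarrow> real"
  assumes lam: "lam > 0" and d: "d > 0"
  shows "0 \<le> lasso_post n lam Y {b. sqrt (\<Sum>i<n. (b i)^2) \<le> d * sqrt (real n) * min (1 / lam) 1}
       \<and> lasso_post n lam Y {b. sqrt (\<Sum>i<n. (b i)^2) \<le> d * sqrt (real n) * min (1 / lam) 1}
          \<le> (exp d * qc)^n"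
proof -
  interpret product_sigma_finite "\<lambda>_::nat. lborel :: real measure" by (rule psf)
  define m where "m = min (1 / lam) 1"
  have m0: "m > 0" using lam by (simp add: m_def)
  define Bs where "Bs = {b::nat\<Rightarrow>real. sqrt (\<Sum>i<n. (b i)^2) \<le> d * sqrt (real n) * m}"
  define Di where "Di i = (\<integral>x. lw lam (Y i) x \<partial>lborel)" for i
  define Ei where "Ei i = (\<integral>x. lw lam (Y i) x * exp (- \<bar>x\<bar> / m) \<partial>lborel)" for i
  have Dipos: "0 < Di i" for i unfolding Di_def using Di_pos lam by simp
  have Ei0: "0 \<le> Ei i" for i unfolding Ei_def
    by (rule Bochner_Integration.integral_nonneg) (simp add: less_imp_le lw_pos)
  have EiD: "Ei i \<le> qc * Di i" for i unfolding Ei_def Di_def m_def using key[OF lam] by simp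
  have intg: "integrable lborel (\<lambda>x. lw lam (Y i) x * exp (- \<bar>x\<bar> / m))" for i
  proof (rule lw_int_bdd)
    show "0 \<le> lam" using lam by simp
    show "(\<lambda>x. exp (- \<bar>x\<bar> / m)) \<in> borel_measurable borel" by measurable
    fix x :: real
    have "- \<bar>x\<bar> / m \<le> 0" using m0 by (simp add: divide_nonpos_pos)
    thus "\<bar>exp (- \<bar>x\<bar> / m)\<bar> \<le> 1" by simp
  qed
  have D: "(\<integral>b. lasso_weight n lam Y b \<partial>lebesgue_n n) = (\<Prod>i<n. Di i)"
  proof -
    have "(\<integral>b. lasso_weight n lam Y b \<partial>lebesgue_n n) = (\<integral>b. (\<Prod>i<n. lw lam (Y i) (b i)) \<partial>lebesgue_n n)"
      by (simp add: weight_prod)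
    also have "\<dots> = (\<Prod>i<n. Di i)" unfolding Di_def
      using lam by (subst product_integral_prod) (auto intro: lw_int)
    finally show ?thesis .
  qed
  have Dp: "0 < (\<Prod>i<n. Di i)" using Dipos by (simp add: prod_pos)
  have N: "(LINT b:Bs | lebesgue_n n. lasso_weight n lam Y b)
        \<le> (\<integral>b. exp (d * real n) * (\<Prod>i<n. lw lam (Y i) (b i) * exp (- \<bar>b i\<bar> / m)) \<partial>lebesgue_n n)"
    unfolding set_lebesgue_integral_def
  proof (rule integral_mono')
    show "integrable (lebesgue_n n) (\<lambda>b. exp (d * real n) * (\<Prod>i<n. lw lam (Y i) (b i) * exp (- \<bar>b i\<bar> / m)))"
      by (intro integrable_mult_right product_integrable_prod intg) auto
    fix b :: "nat \<Rightarrow> real"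
    have pr: "(\<Prod>i<n. lw lam (Y i) (b i) * exp (- \<bar>b i\<bar> / m))
        = lasso_weight n lam Y b * exp (- (\<Sum>i<n. \<bar>b i\<bar>) / m)"
    proof -
      have "- (\<Sum>i<n. \<bar>b i\<bar>) / m = (\<Sum>i<n. - \<bar>b i\<bar> / m)"
        by (simp add: sum_negf sum_divide_distrib)
      hence "exp (- (\<Sum>i<n. \<bar>b i\<bar>) / m) = (\<Prod>i<n. exp (- \<bar>b i\<bar> / m))"
        by (simp add: exp_sum)
      thus ?thesis by (simp add: weight_prod prod.distrib)
    qed
    have W0: "0 < lasso_weight n lam Y b" by (simp add: lasso_weight_def)
    show "0 \<le> exp (d * real n) * (\<Prod>i<n. lw lam (Y i) (b i) * exp (- \<bar>b i\<bar> / m))"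
      unfolding pr using W0 by simp
    show "indicator Bs b *\<^sub>R lasso_weight n lam Y b
        \<le> exp (d * real n) * (\<Prod>i<n. lw lam (Y i) (b i) * exp (- \<bar>b i\<bar> / m))"
    proof (cases "b \<in> Bs")
      case False
      thus ?thesis unfolding pr using W0 by simp
    next
      case True
      define S where "S = (\<Sum>i<n. (b i)^2)"
      have S0: "0 \<le> S" unfolding S_def by (simp add: sum_nonneg)
      have t0: "0 \<le> d * sqrt (real n) * m" using d m0 by simp
      have "sqrt S \<le> d * sqrt (real n) * m" using True by (simp add: Bs_def S_def)
      hence "(sqrt S)^2 \<le> (d * sqrt (real n) * m)^2" using S0 by (intro power_mono) auto
      hence Sle: "S \<le> d^2 * real n * m^2" using S0 by (simp add: power_mult_distrib)
      have "(\<Sum>i<n. \<bar>b i\<bar>)^2 \<le> (\<Sum>i<n. \<bar>b i\<bar>^2) * real n"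
        using sum_squared_le_sum_of_squares[of "\<lambda>i. \<bar>b i\<bar>" "{..<n}"] unfolding card_lessThan .
      also have "\<dots> = S * real n" unfolding S_def power2_abs ..
      also have "\<dots> \<le> (d^2 * real n * m^2) * real n" using Sle by (rule mult_right_mono) simp
      also have "\<dots> = (d * real n * m)^2" by (simp add: power2_eq_square)
      finally have "(\<Sum>i<n. \<bar>b i\<bar>)^2 \<le> (d * real n * m)^2" .
      hence "(\<Sum>i<n. \<bar>b i\<bar>) \<le> d * real n * m"
        by (rule power2_le_imp_le) (use d m0 in simp)
      hence "(\<Sum>i<n. \<bar>b i\<bar>) / m \<le> d * real n" using m0 by (simp add: divide_le_eq)
      hence "0 \<le> d * real n - (\<Sum>i<n. \<bar>b i\<bar>) / m" by simp
      hence "1 \<le> exp (d * real n - (\<Sum>i<n. \<bar>b i\<bar>) / m)" by simp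
      hence "lasso_weight n lam Y b * 1 \<le> lasso_weight n lam Y b * exp (d * real n - (\<Sum>i<n. \<bar>b i\<bar>) / m)"
        using W0 by (intro mult_left_mono) auto
      also have "\<dots> = exp (d * real n) * (lasso_weight n lam Y b * exp (- (\<Sum>i<n. \<bar>b i\<bar>) / m))"
      proof -
        have "exp (d * real n - (\<Sum>i<n. \<bar>b i\<bar>) / m) = exp (d * real n) * exp (- (\<Sum>i<n. \<bar>b i\<bar>) / m)"
          by (subst exp_add[symmetric]) simp
        thus ?thesis by (simp only: mult.left_commute)
      qed
      finally have "lasso_weight n lam Y b * 1 \<le> exp (d * real n) * (lasso_weight n lam Y b * exp (- (\<Sum>i<n. \<bar>b i\<bar>) / m))" .
      moreover have "indicator Bs b *\<^sub>R lasso_weight n lam Y b = lasso_weight n lam Y b * 1"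
        using True by simp
      ultimately show ?thesis unfolding pr by (simp only:)
    qed
  qed
  also have "\<dots> = exp (d * real n) * (\<Prod>i<n. Ei i)" unfolding Ei_def
    by (subst integral_mult_right_zero, subst product_integral_prod) (use intg in auto)
  also have "\<dots> \<le> exp (d * real n) * (\<Prod>i<n. qc * Di i)"
    using Ei0 EiD by (intro mult_left_mono prod_mono) auto
  also have "\<dots> = (exp d * qc)^n * (\<Prod>i<n. Di i)"
  proof -
    have "exp (d * real n) = exp d ^ n" by (metis exp_of_nat_mult mult.commute)
    thus ?thesis by (simp add: prod.distrib power_mult_distrib prod_constant)
  qed
  finally have Nle: "(LINT b:Bs | lebesgue_n n. lasso_weight n lam Y b) \<le> (exp d * qc)^n * (\<Prod>i<n. Di i)" .
  have N0: "0 \<le> (LINT b:Bs | lebesgue_n n. lasso_weight n lam Y b)"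
    unfolding set_lebesgue_integral_def
    by (rule Bochner_Integration.integral_nonneg) (simp add: lasso_weight_def)
  have "lasso_post n lam Y Bs = (LINT b:Bs | lebesgue_n n. lasso_weight n lam Y b) / (\<Prod>i<n. Di i)"
    unfolding lasso_post_def D ..
  moreover have "(LINT b:Bs | lebesgue_n n. lasso_weight n lam Y b) / (\<Prod>i<n. Di i) \<le> (exp d * qc)^n"
    using Nle Dp by (simp add: divide_le_eq)
  moreover have "0 \<le> (LINT b:Bs | lebesgue_n n. lasso_weight n lam Y b) / (\<Prod>i<n. Di i)"
    using N0 Dp by simp
  ultimately show ?thesis unfolding Bs_def m_def by simp
qed

theorem theorem7:
  fixes lam :: "nat \<Rightarrow> real"
  assumes "\<forall>n. lam n > 0"
    and "filterlim (\<lambda>n. sqrt (real n) / lam n) at_top sequentially"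
  shows "\<exists>\<delta>>0. (\<lambda>n. LINT Y | std_gauss_n n.
            lasso_post n (lam n) Y
              {b. sqrt (\<Sum>i<n. (b i)^2) \<le> \<delta> * sqrt (real n) * min (1 / lam n) 1})
          \<longlonglongrightarrow> 0"
proof -
  define d where "d = ln ((1 + qc) / (2 * qc))"
  have q: "0 < qc" "qc < 1" by (rule qc_bounds)+
  have "1 < (1 + qc) / (2 * qc)" using q by (simp add: field_simps)
  hence d0: "d > 0" unfolding d_def by simp
  have "exp d = (1 + qc) / (2 * qc)" unfolding d_def using q by simp
  hence r: "exp d * qc = (1 + qc) / 2" using q by simp
  define r where "r = (1 + qc) / 2"
  have r0: "0 \<le> r" "r < 1" using q by (auto simp: r_def)
  show ?thesis
  proof (rule exI[where x=d], rule conjI[OF d0])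
    show "(\<lambda>n. LINT Y | std_gauss_n n.
            lasso_post n (lam n) Y
              {b. sqrt (\<Sum>i<n. (b i)^2) \<le> d * sqrt (real n) * min (1 / lam n) 1})
          \<longlonglongrightarrow> 0"
    proof (rule Lim_null_comparison)
      show "(\<lambda>n. r ^ n) \<longlonglongrightarrow> 0" using r0 by (intro LIMSEQ_power_zero) auto
      show "\<forall>\<^sub>F n in sequentially. norm (LINT Y | std_gauss_n n.
            lasso_post n (lam n) Y
              {b. sqrt (\<Sum>i<n. (b i)^2) \<le> d * sqrt (real n) * min (1 / lam n) 1}) \<le> r ^ n"
      proof (rule always_eventually, rule allI)
        fix n :: nat
        let ?g = "\<lambda>Y. lasso_post n (lam n) Y
              {b. sqrt (\<Sum>i<n. (b i)^2) \<le> d * sqrt (real n) * min (1 / lam n) 1}"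
        interpret P: prob_space "std_gauss_n n"
          by (intro prob_space_PiM prob_space_normal_density) auto
        have b: "0 \<le> ?g Y \<and> ?g Y \<le> r ^ n" for Y
          using post_bound[OF _ d0, of "lam n" n Y] assms(1) r unfolding r_def by simp
        have i0: "0 \<le> (\<integral>Y. ?g Y \<partial>std_gauss_n n)"
          using b by (intro Bochner_Integration.integral_nonneg) blast
        have i1: "(\<integral>Y. ?g Y \<partial>std_gauss_n n) \<le> r ^ n"
        proof -
        have "(\<integral>Y. ?g Y \<partial>std_gauss_n n) \<le> (\<integral>Y. r ^ n \<partial>std_gauss_n n)"
        proof (rule integral_mono'[OF P.integrable_const])
          fix Y show "?g Y \<le> r ^ n" using b by blast
          show "0 \<le> r ^ n" using r0 by simp
        qed
        also have "(\<integral>Y. r ^ n \<partial>std_gauss_n n) = r ^ n"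
          using lebesgue_integral_const[of "std_gauss_n n" "r ^ n"] P.prob_space by simp
        finally show ?thesis .
        qed
        show "norm (\<integral>Y. ?g Y \<partial>std_gauss_n n) \<le> r ^ n"
          unfolding real_norm_def abs_of_nonneg[OF i0] by (rule i1)
      qed
    qed
  qed
qed

end
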